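(* Let $C=(1,c_2,c_3,c_4,c_5,c_6)=(1,c_2,2c_2,c_4,c_2+c_4,2c_4)$ be a system that is canonical and whose subsystem $(1,c_2,c_3,c_4,c_5)$ is noncanonical, and let $\ell=\lceil c_5/c_3\rceil$. Then $c_4\ge 3c_2-1$, $c_4\ne 3c_2$, $\mathrm{grd}_C(\ell c_3)\le\ell$, and $\mathrm{grd}_C(\ell c_3)=\ell c_3-c_5+1-\lfloor(\ell c_3-c_5)/c_2\rfloor(c_2-1)$.
   Context: A system is a tuple $C=(c_1,\dots,c_n)$ of integers with $1=c_1<c_2<\dots<c_n$; for $k\le n$, $(c_1,\dots,c_k)$ is a subsystem. For a positive integer $v$, $\mathrm{opt}_C(v)$ is the minimum of $\sum_i x_i$ over $x\in\mathbb{Z}_{\ge0}^n$ with $\sum_i c_ix_i=v$. The greedy representation of $v$ is produced by: for $i=n$ down to $1$, while $c_i\le$ remaining value, take a coin $c_i$. $\mathrm{grd}_C(v)$ is its number of coins. A positive integer $w$ is a counterexample if $\mathrm{opt}_C(w)<\mathrm{grd}_C(w)$; $C$ is canonical if it has none, noncanonical otherwise. *)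

theory Defs
  imports Complex_Main
begin

text \<open>A system is a list c = [c_1,...,c_n] (0-indexed in Isabelle) with c_1 = 1 and
  strictly increasing entries.\<close>
definition is_system :: "nat list \<Rightarrow> bool" where
  "is_system c \<longleftrightarrow> c \<noteq> [] \<and> c ! 0 = 1 \<and> sorted_wrt (<) c"

definition opt :: "nat list \<Rightarrow> nat \<Rightarrow> nat" where
  "opt c v = (LEAST k. \<exists>x :: nat \<Rightarrow> nat.
      (\<Sum>i<length c. c ! i * x i) = v \<and> (\<Sum>i<length c. x i) = k)"

text \<open>Greedy: process coins from largest to smallest; for coin d, while d \<le> remaining
  value take a coin d, i.e. take (remaining div d) coins and continue with remaining mod d.\<close>
fun grd_desc :: "nat list \<Rightarrow> nat \<Rightarrow> nat" where
  "grd_desc [] v = 0"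
| "grd_desc (d # ds) v = v div d + grd_desc ds (v mod d)"

definition grd :: "nat list \<Rightarrow> nat \<Rightarrow> nat" where
  "grd c v = grd_desc (rev c) v"

definition counterexample :: "nat list \<Rightarrow> nat \<Rightarrow> bool" where
  "counterexample c w \<longleftrightarrow> 0 < w \<and> opt c w < grd c w"

definition canonical :: "nat list \<Rightarrow> bool" where
  "canonical c \<longleftrightarrow> (\<forall>w. \<not> counterexample c w)"

end

theory Submission
  imports Defs
begin

lemma opt_le:
  assumes "(\<Sum>i<length c. c ! i * x i) = v"
  shows "opt c v \<le> (\<Sum>i<length c. x i)"
  unfolding opt_def by (rule Least_le) (use assms in blast)

lemma opt_ex:
  assumes "c \<noteq> []" "c ! 0 = 1"
  shows "\<exists>x. (\<Sum>i<length c. c ! i * x i) = v \<and> (\<Sum>i<length c. x i) = opt c v"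
proof -
  have ex: "\<exists>k x. (\<Sum>i<length c. c ! i * x i) = v \<and> (\<Sum>i<length c. x i) = k"
  proof (intro exI conjI)
    let ?x = "\<lambda>i::nat. if i = 0 then v else 0"
    show "(\<Sum>i<length c. c ! i * ?x i) = v"
      using assms by (simp add: sum.delta if_distrib[of "\<lambda>t. c ! _ * t"] cong: if_cong)
    show "(\<Sum>i<length c. ?x i) = (\<Sum>i<length c. ?x i)" ..
  qed
  show ?thesis unfolding opt_def by (rule LeastI_ex) (use ex in blast)
qed

lemma grd_le_opt: "canonical c \<Longrightarrow> 0 < w \<Longrightarrow> grd c w \<le> opt c w"
  unfolding canonical_def counterexample_def by (meson not_le)

lemma grd_tail:
  assumes "v < 4 * a" "0 < a"
  shows "grd_desc [3*a, 2*a, a, 1] v = (v div a + 3) div 4 + v mod a"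
proof -
  define m where "m = v div a"
  define r where "r = v mod a"
  have v: "v = a * m + r" unfolding m_def r_def by simp
  have r: "r < a" using assms unfolding r_def by simp
  have m: "m < 4" using assms unfolding m_def
    by (metis div_less_iff_less_mult mult.commute)
  have "m = 0 \<or> m = 1 \<or> m = 2 \<or> m = 3" using m by arith
  then show ?thesis
  proof (elim disjE)
    assume "m = 0" thus ?thesis using r v by simp
  next
    assume "m = 1" thus ?thesis using r v by simp
  next
    assume h: "m = 2"
    have "(a*2 + r) div (3*a) = 0" using r by simp
    moreover have "(a*2 + r) div (2*a) = 1" by (rule div_nat_eqI) (use r in simp_all)
    moreover have "(a*2 + r) mod (2*a) = r" by (rule mod_nat_eqI) (use r in simp_all)
    ultimately show ?thesis using r v h by simp
  next
    assume h: "m = 3"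
    have "(a*3 + r) div (3*a) = 1" by (rule div_nat_eqI) (use r in simp_all)
    moreover have "(a*3 + r) mod (3*a) = r" by (rule mod_nat_eqI) (use r in simp_all)
    ultimately show ?thesis using r v h by simp
  qed
qed

lemma div4_aux: "(n::nat) div 4 + (n mod 4 + 3) div 4 = (n + 3) div 4"
  by presburger

lemma grd5:
  assumes "0 < a"
  shows "grd [1, a, 2*a, 3*a, 4*a] w = (w div a + 3) div 4 + w mod a"
proof -
  have "grd [1, a, 2*a, 3*a, 4*a] w = w div (4*a) + grd_desc [3*a, 2*a, a, 1] (w mod (4*a))"
    by (simp add: grd_def)
  also have "\<dots> = w div (4*a) + ((w mod (4*a)) div a + 3) div 4 + (w mod (4*a)) mod a"
    using assms grd_tail[of "w mod (4*a)" a] by simp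
  also have "\<dots> = (w div a + 3) div 4 + w mod a"
  proof -
    have e1: "w div (4*a) = w div a div 4" by (simp add: div_mult2_eq mult.commute)
    have e2: "w mod (4*a) = a * (w div a mod 4) + w mod a"
      by (metis mod_mult2_eq mult.commute)
    have e3: "(w mod (4*a)) div a = w div a mod 4" using e2 assms by simp
    have e4: "(w mod (4*a)) mod a = w mod a" using e2 assms by simp
    show ?thesis unfolding e1 e3 e4 using div4_aux[of "w div a"] by simp
  qed
  finally show ?thesis .
qed

lemma canon5:
  assumes "0 < a"
  shows "canonical [1, a, 2*a, 3*a, 4*a]"
  unfolding canonical_def counterexample_def
proof (intro allI notI)
  fix w assume "0 < w \<and> opt [1, a, 2*a, 3*a, 4*a] w < grd [1, a, 2*a, 3*a, 4*a] w"
  then have lt: "opt [1, a, 2*a, 3*a, 4*a] w < grd [1, a, 2*a, 3*a, 4*a] w" by blast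
  obtain x where x1: "(\<Sum>i<length [1, a, 2*a, 3*a, 4*a]. [1, a, 2*a, 3*a, 4*a] ! i * x i) = w"
    and x2: "(\<Sum>i<length [1, a, 2*a, 3*a, 4*a]. x i) = opt [1, a, 2*a, 3*a, 4*a] w"
    using opt_ex[of "[1, a, 2*a, 3*a, 4*a]" w] by auto
  have w: "w = x 0 + a * (x 1 + 2 * x 2 + 3 * x 3 + 4 * x 4)"
    using x1 by (simp add: numeral_eq_Suc algebra_simps)
  have o: "opt [1, a, 2*a, 3*a, 4*a] w = x 0 + x 1 + x 2 + x 3 + x 4"
    using x2 by (simp add: numeral_eq_Suc algebra_simps)
  define y where "y = x 1 + 2 * x 2 + 3 * x 3 + 4 * x 4"
  define d where "d = x 0 div a"
  have q: "w div a = d + y" unfolding w y_def[symmetric] d_def using assms by simp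
  have r: "w mod a = x 0 mod a" unfolding w y_def[symmetric] using assms by simp
  have x0: "x 0 \<ge> d + x 0 mod a"
  proof -
    have "x 0 = a * d + x 0 mod a" unfolding d_def by simp
    moreover have "a * d \<ge> d" using assms by simp
    ultimately show ?thesis by linarith
  qed
  have "grd [1, a, 2*a, 3*a, 4*a] w = (d + y + 3) div 4 + x 0 mod a"
    using grd5[OF assms] q r by simp
  also have "\<dots> \<le> x 0 + x 1 + x 2 + x 3 + x 4"
  proof -
    have "(d + y + 3) div 4 \<le> d + (y + 3) div 4" by simp
    moreover have "(y + 3) div 4 \<le> x 1 + x 2 + x 3 + x 4"
    proof -
      have "y + 3 < 4 * (x 1 + x 2 + x 3 + x 4 + 1)" unfolding y_def by simp
      then show ?thesis by simp
    qed
    ultimately show ?thesis using x0 by linarith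
  qed
  finally show False using lt o by simp
qed

theorem lemma10:
  fixes c :: "nat list" and l :: nat
  assumes "is_system c"
    and "length c = 6"
    and "c ! 2 = 2 * c ! 1"
    and "c ! 4 = c ! 1 + c ! 3"
    and "c ! 5 = 2 * c ! 3"
    and "canonical c"
    and "\<not> canonical (take 5 c)"
    and "l = nat \<lceil>real (c ! 4) / real (c ! 2)\<rceil>"
  shows "c ! 3 \<ge> 3 * c ! 1 - 1
    \<and> c ! 3 \<noteq> 3 * c ! 1
    \<and> grd c (l * c ! 2) \<le> l
    \<and> int (grd c (l * c ! 2)) =
           int (l * c ! 2) - int (c ! 4) + 1
           - \<lfloor>(real (l * c ! 2) - real (c ! 4)) / real (c ! 1)\<rfloor> * (int (c ! 1) - 1)"
proof -
  define a where "a = c ! 1"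
  define b where "b = c ! 3"
  have srt: "sorted_wrt (<) c" and c0: "c ! 0 = 1" using assms(1) unfolding is_system_def by auto
  have "c ! 0 < c ! 1" using srt assms(2) by (simp add: sorted_wrt_iff_nth_less)
  then have a2: "a \<ge> 2" using c0 a_def by simp
  have "c ! 2 < c ! 3" using srt assms(2) by (simp add: sorted_wrt_iff_nth_less)
  then have ba: "b \<ge> 2 * a + 1" using assms(3) a_def b_def by simp
  have c: "c = [1, a, 2*a, b, a+b, 2*b]"
  proof (rule nth_equalityI)
    show "length c = length [1, a, 2*a, b, a+b, 2*b]" using assms(2) by simp
  next
    fix i assume "i < length c"
    then have "i = 0 \<or> i = 1 \<or> i = 2 \<or> i = 3 \<or> i = 4 \<or> i = 5" using assms(2) by arith
    then show "c ! i = [1, a, 2*a, b, a+b, 2*b] ! i"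
      by (elim disjE) (simp_all add: assms(3-5) a_def b_def c0)
  qed
  have grdc: "grd c v = v div (2*b) + (v mod (2*b)) div (a+b) + grd_desc [b, 2*a, a, 1] ((v mod (2*b)) mod (a+b))" for v
    by (simp add: c grd_def)
  have canon_le: "grd c w \<le> opt c w" if "0 < w" for w
    using grd_le_opt[OF assms(6) that] .
  have C1: "b \<ge> 3 * a - 1"
  proof (rule ccontr)
    assume "\<not> b \<ge> 3 * a - 1"
    then have h: "b + 2 \<le> 3 * a" by simp
    have o: "opt c (4*a) \<le> 2"
    proof -
      let ?x = "\<lambda>i::nat. if i = 2 then 2 else (0::nat)"
      have "opt c (4*a) \<le> (\<Sum>i<length c. ?x i)"
        by (rule opt_le) (simp add: c numeral_eq_Suc)
      also have "\<dots> = 2" by (simp add: c numeral_eq_Suc)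
      finally show ?thesis .
    qed
    have d1: "(4*a) div (2*b) = 0" using ba by simp
    have m1: "(4*a) mod (2*b) = 4*a" using ba by simp
    have d2: "(4*a) div (a+b) = 1" by (rule div_nat_eqI) (use ba h in simp_all)
    have m2: "(4*a) mod (a+b) = 3*a - b"
      by (rule mod_nat_eqI) (use ba h in \<open>simp_all add: dvd_def\<close>)
    have lt: "3*a - b < a" using ba a2 by simp
    have t: "grd_desc [b, 2*a, a, 1] (3*a - b) = 3*a - b" using ba lt by simp
    have "grd c (4*a) = 1 + (3*a - b)" unfolding grdc d1 m1 d2 m2 t by simp
    then have "opt c (4*a) < grd c (4*a)" using o h by simp
    moreover have "0 < 4*a" using a2 by simp
    ultimately show False using canon_le[of "4*a"] by simp
  qed
  have C2: "b \<noteq> 3 * a"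
  proof
    assume h: "b = 3 * a"
    have "take 5 c = [1, a, 2*a, 3*a, 4*a]" using h by (simp add: c numeral_eq_Suc)
    then show False using canon5[of a] a2 assms(7) by simp
  qed
  define V where "V = l * (2*a)"
  have lr: "l = nat \<lceil>real (a+b) / real (2*a)\<rceil>" using assms(8) c by simp
  have cpos: "\<lceil>real (a+b) / real (2*a)\<rceil> \<ge> 0"
  proof -
    have x0: "0 \<le> real (a+b) / real (2*a)" by simp
    have "-1 < real (a+b) / real (2*a)" using x0 by linarith
    then show ?thesis by simp
  qed
  have rl: "real l = of_int \<lceil>real (a+b) / real (2*a)\<rceil>" using lr cpos by simp
  have V1: "a + b \<le> V"
  proof -
    have "real (a+b) / real (2*a) \<le> real l" using rl by simp
    then have "real (a+b) \<le> real l * real (2*a)" using a2 by (simp add: divide_le_eq)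
    then show ?thesis unfolding V_def by (simp flip: of_nat_mult)
  qed
  have V2: "V < a + b + 2*a"
  proof -
    have "real l - 1 < real (a+b) / real (2*a)" using rl ceiling_correct by simp
    then have "(real l - 1) * real (2*a) < real (a+b)" using a2 by (simp add: less_divide_eq)
    then have "real V < real (a + b + 2*a)" unfolding V_def by (simp add: algebra_simps)
    then show ?thesis by linarith
  qed
  have V3: "V < 2 * b"
  proof (cases "b = 3*a - 1")
    case True
    have "l \<ge> 2"
    proof (rule ccontr)
      assume "\<not> l \<ge> 2" then have "l \<le> 1" by simp
      then have "V \<le> 2*a" unfolding V_def by simp
      then show False using V1 True a2 by simp
    qed
    moreover have "l < 3"
    proof (rule ccontr)
      assume "\<not> l < 3" then have "l \<ge> 3" by simp
      then have "V \<ge> 3*(2*a)" unfolding V_def by (metis mult_le_mono1)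
      then show False using V2 True a2 by simp
    qed
    ultimately have "l = 2" by simp
    then show ?thesis using True a2 unfolding V_def by simp
  next
    case False
    then have "b \<ge> 3*a + 1" using C1 C2 by simp
    then show ?thesis using V2 by simp
  qed
  have Vpos: "0 < V" using V1 ba by simp
  have C3: "grd c V \<le> l"
  proof -
    let ?x = "\<lambda>i::nat. if i = 2 then l else (0::nat)"
    have "opt c V \<le> (\<Sum>i<length c. ?x i)"
      by (rule opt_le) (simp add: c numeral_eq_Suc V_def)
    also have "\<dots> = l" by (simp add: c numeral_eq_Suc)
    finally show ?thesis using canon_le[OF Vpos] by simp
  qed
  define R where "R = V - (a + b)"
  have R: "R < 2 * a" using V1 V2 unfolding R_def by simp
  have e1: "V div (2*b) = 0" "V mod (2*b) = V" using V3 by simp_all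
  have e2: "V div (a+b) = 1" by (rule div_nat_eqI) (use V1 V2 ba in simp_all)
  have e3: "V mod (a+b) = R" unfolding R_def
    by (rule mod_nat_eqI) (use V1 V2 ba in \<open>simp_all add: dvd_def\<close>)
  have e4: "grd_desc [b, 2*a, a, 1] R = R div a + R mod a" using R ba by simp
  have G: "grd c V = 1 + R div a + R mod a" unfolding grdc e1 e2 e3 e4 by simp
  have fl: "\<lfloor>(real V - real (a+b)) / real a\<rfloor> = int (R div a)"
  proof -
    have "real V - real (a+b) = real R" unfolding R_def using V1 by simp
    then show ?thesis by (simp add: floor_divide_of_nat_eq)
  qed
  have C4: "int (grd c V) = int V - int (a+b) + 1 - \<lfloor>(real V - real (a+b)) / real a\<rfloor> * (int a - 1)"
  proof -
    have "int R = int (R div a) * int a + int (R mod a)"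
      by (metis div_mult_mod_eq of_nat_add of_nat_mult)
    moreover have "int R = int V - int (a+b)" unfolding R_def using V1 by simp
    ultimately show ?thesis unfolding G fl using a2 by (simp add: algebra_simps)
  qed
  have cc: "c ! 1 = a" "c ! 2 = 2*a" "c ! 3 = b" "c ! 4 = a+b" by (simp_all add: c)
  show ?thesis unfolding cc using C1 C2 C3 C4 unfolding V_def by simp
qed

end
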